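(* Let $C=\{C_n\}_{n\in\mathbb N}$, $C_n\subseteq \Sigma_n^n$, be the code family fixed in the context (we suppress the index $n$). For any unbounded-time (quantum) algorithm $\mathcal{B}$ that makes polynomially many classical queries to $H$ and any polynomial $s$, there is a negligible function $\mu$ such that for every family $\{z_H\}_{H}$ of $s(n)$-bit classical advice strings (indexed by functions $H$), $$\Pr_{H,r}\big[f_C^H(\mathcal{B}^H(z_H,r))=r\big]\le \mu(n),$$ where $H\leftarrow \mathsf{Func}([n]\times\Sigma,\{0,1\})$ and $r\leftarrow\{0,1\}^n$ are uniform.
   Context: For sets $X,Y$, $\mathsf{Func}(X,Y)$ is the set of all functions $X\to Y$; $[n]=\{1,\dots,n\}$. For a code $C\subseteq\Sigma^n$ and $H:[n]\times\Sigma\to\{0,1\}$, the YZ function is $f_C^H:C\to\{0,1\}^n$, $f_C^H(v_1,\dots,v_n)=H(1,v_1)\|H(2,v_2)\|\cdots\|H(n,v_n)$; the event $f_C^H(\mathbf v)=r$ includes the requirement $\mathbf v\in C$. A code $C\subseteq\Sigma^n$ is $(\zeta,\ell,L)$-list-recoverable if for all subsets $T_1,\dots,T_n\subseteq\Sigma$ with $|T_i|\le\ell$, the number of codewords $(v_1,\dots,v_n)\in C$ with $|\{i: v_i\in T_i\}|\ge(1-\zeta)n$ is at most $L$. Fixed code family (from Yamakawa–Zhandry and Liu): $C=\{C_n\}$, $C_n\subseteq\Sigma_n^n$, which is $(\zeta,\ell,L)$-list-recoverable with $\zeta=\Omega(1)$, $\ell=2^{n^c}$, $L=2^{\tilde O(n^{c'})}$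 for some constants $0<c<c'<1$, and which moreover has the property that there is a QPT algorithm $\mathcal A$ and a family of $\mathrm{poly}(n)$-qubit quantum advice states $\{|z_H\rangle\}_H$ such that for every $r\in\{0,1\}^n$, $\Pr_H[f_C^H(\mathcal A(|z_H\rangle,r))=r]\ge1-\mathrm{negl}(n)$ for uniform $H\leftarrow\mathsf{Func}([n]\times\Sigma,\{0,1\})$. "Classical queries" means the algorithm submits a classical input $x$ and receives $H(x)$. The advice $z_H$ may be an arbitrary function of $H$. *)

theory Defs
  imports "HOL-Probability.Probability"
begin

text \<open>Functions H : [n] x Sigma -> {0,1}; represented as total functions that are
  False outside the domain [n] x Sigma (so uniform sampling is over Func([n] x Sigma, {0,1})).\<close>
type_synonym 'a hfun = "nat \<times> 'a \<Rightarrow> bool"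

type_synonym 'a transcript = "((nat \<times> 'a) \<times> bool) list"

definition hfuncs :: "nat \<Rightarrow> 'a set \<Rightarrow> 'a hfun set" where
  "hfuncs n \<Sigma> = {H. \<forall>x. x \<notin> {1..n} \<times> \<Sigma> \<longrightarrow> H x = False}"

definition bitstrings :: "nat \<Rightarrow> bool list set" where
  "bitstrings n = {r. length r = n}"

definition words :: "nat \<Rightarrow> 'a set \<Rightarrow> 'a list set" where
  "words n \<Sigma> = {v. length v = n \<and> set v \<subseteq> \<Sigma>}"

text \<open>The event f_C^H(v) = r (includes v \<in> C). Coordinate i \<in> [n] of v is v ! (i-1).\<close>
definition yz_eq :: "nat \<Rightarrow> 'a list set \<Rightarrow> 'a hfun \<Rightarrow> 'a list \<Rightarrow> bool list \<Rightarrow> bool" where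
  "yz_eq n C H v r \<longleftrightarrow> v \<in> C \<and> length v = n \<and> map (\<lambda>i. H (Suc i, v ! i)) [0..<n] = r"

definition list_recoverable ::
  "nat \<Rightarrow> 'a set \<Rightarrow> 'a list set \<Rightarrow> real \<Rightarrow> real \<Rightarrow> real \<Rightarrow> bool" where
  "list_recoverable n \<Sigma> C \<zeta> ell L \<longleftrightarrow>
     (\<forall>T :: nat \<Rightarrow> 'a set. (\<forall>i\<in>{1..n}. T i \<subseteq> \<Sigma> \<and> real (card (T i)) \<le> ell) \<longrightarrow>
        real (card {v \<in> C. real (card {i\<in>{1..n}. v ! (i - 1) \<in> T i}) \<ge> (1 - \<zeta>) * real n}) \<le> L)"

text \<open>Run of an adaptive randomized strategy making k classical queries:
  nq gives the distribution of the next query given the transcript so far.\<close>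
fun run_queries :: "('a transcript \<Rightarrow> (nat \<times> 'a) pmf) \<Rightarrow> 'a hfun \<Rightarrow> nat \<Rightarrow> 'a transcript \<Rightarrow> 'a transcript pmf" where
  "run_queries nq H 0 h = return_pmf h"
| "run_queries nq H (Suc k) h = nq h \<bind> (\<lambda>x. run_queries nq H k (h @ [(x, H x)]))"

definition alg_output ::
  "('a transcript \<Rightarrow> (nat \<times> 'a) pmf) \<Rightarrow> ('a transcript \<Rightarrow> 'a list pmf) \<Rightarrow> 'a hfun \<Rightarrow> nat \<Rightarrow> 'a list pmf" where
  "alg_output nq out H k = run_queries nq H k [] \<bind> out"

text \<open>Success probability Pr_{H,r}[f_C^H(B^H(z_H, r)) = r] (also over B's internal randomness).
  The strategy receives n, the advice z_H and r.\<close>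
definition success_prob ::
  "(nat \<Rightarrow> bool list \<Rightarrow> bool list \<Rightarrow> 'a transcript \<Rightarrow> (nat \<times> 'a) pmf) \<Rightarrow>
   (nat \<Rightarrow> bool list \<Rightarrow> bool list \<Rightarrow> 'a transcript \<Rightarrow> 'a list pmf) \<Rightarrow> (nat \<Rightarrow> nat) \<Rightarrow>
   (nat \<Rightarrow> 'a set) \<Rightarrow> (nat \<Rightarrow> 'a list set) \<Rightarrow> nat \<Rightarrow> ('a hfun \<Rightarrow> bool list) \<Rightarrow> real" where
  "success_prob nq out q \<Sigma> C n z =
     pmf (do { H \<leftarrow> pmf_of_set (hfuncs n (\<Sigma> n));
               r \<leftarrow> pmf_of_set (bitstrings n);
               v \<leftarrow> alg_output (nq n (z H) r) (out n (z H) r) H (q n);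
               return_pmf (yz_eq n (C n) H v r) }) True"

definition poly_bounded :: "(nat \<Rightarrow> nat) \<Rightarrow> bool" where
  "poly_bounded f \<longleftrightarrow> (\<exists>K d::nat. \<forall>n. f n \<le> K * (n + 1) ^ d)"

definition negl_fun :: "(nat \<Rightarrow> real) \<Rightarrow> bool" where
  "negl_fun \<mu> \<longleftrightarrow> (\<forall>c::nat. \<exists>N. \<forall>n\<ge>N. \<bar>\<mu> n\<bar> \<le> 1 / real n ^ c)"

definition good_code_family :: "(nat \<Rightarrow> 'a set) \<Rightarrow> (nat \<Rightarrow> 'a list set) \<Rightarrow> bool" where
  "good_code_family \<Sigma> C \<longleftrightarrow>
     (\<forall>n. finite (\<Sigma> n) \<and> C n \<subseteq> words n (\<Sigma> n)) \<and>
     (\<exists>\<zeta> c c' K k. \<zeta> > 0 \<and> 0 < c \<and> c < c' \<and> c' < 1 \<and>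
        (\<exists>N. \<forall>n\<ge>N. list_recoverable n (\<Sigma> n) (C n) \<zeta>
                 (2 powr (real n powr c))
                 (2 powr (K * real n powr c' * (ln (real n)) ^ k))))"

end

theory Submission
  imports Defs "HOL-Real_Asymp.Real_Asymp"
begin

definition sat :: "'a hfun \<Rightarrow> 'a transcript \<Rightarrow> bool" where
  "sat H \<kappa> \<longleftrightarrow> (\<forall>p\<in>set \<kappa>. H (fst p) = snd p)"

lemma sat_append[simp]: "sat H (a @ b) \<longleftrightarrow> sat H a \<and> sat H b"
  by (auto simp: sat_def)
lemma sat_Cons[simp]: "sat H (p # b) \<longleftrightarrow> H (fst p) = snd p \<and> sat H b"
  by (auto simp: sat_def)
lemma sat_Nil[simp]: "sat H []"
  by (auto simp: sat_def)

lemma halve: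
  assumes "finite S" "\<And>s. s \<in> S \<Longrightarrow> f s \<in> S" "\<And>s. s\<in>S \<Longrightarrow> f (f s) = s"
    "\<And>s. s \<in> S \<Longrightarrow> P (f s) \<longleftrightarrow> \<not> P s"
  shows "card S = 2 * card {s\<in>S. P s}"
proof -
  have b: "bij_betw f {s\<in>S. P s} {s\<in>S. \<not> P s}"
    by (rule bij_betw_byWitness[where f'=f]) (auto simp: assms)
  hence "card {s\<in>S. P s} = card {s\<in>S. \<not>P s}" by (rule bij_betw_same_card)
  moreover have "card S = card {s\<in>S. P s} + card {s\<in>S. \<not>P s}"
    using assms(1) by (subst card_Un_disjoint[symmetric]) (auto intro: arg_cong[where f=card])
  ultimately show ?thesis by simp
qed

lemma hfuncs_eq: "hfuncs n S = (\<lambda>A x. x \<in> A) ` Pow ({1..n} \<times> S)"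
proof -
  have "H \<in> (\<lambda>A x. x \<in> A) ` Pow ({1..n} \<times> S)" if "H \<in> hfuncs n S" for H
  proof
    show "H = (\<lambda>x. x \<in> {x. H x})" by simp
    show "{x. H x} \<in> Pow ({1..n} \<times> S)" using that unfolding hfuncs_def by (auto simp: mem_Times_iff) (metis atLeastAtMost_iff)+
  qed
  then show ?thesis by (auto simp: hfuncs_def)
qed

lemma finite_hfuncs: "finite S \<Longrightarrow> finite (hfuncs n S)"
  by (simp add: hfuncs_eq)

lemma hfuncs_flip: "H \<in> hfuncs n S \<Longrightarrow> x \<in> {1..n} \<times> S \<Longrightarrow> H(x := b) \<in> hfuncs n S"
  by (auto simp: hfuncs_def)

lemma hfuncs_nonempty: "(\<lambda>_. False) \<in> hfuncs n S"
  by (auto simp: hfuncs_def)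

definition NN :: "nat \<Rightarrow> 'a set \<Rightarrow> 'a transcript \<Rightarrow> nat" where
  "NN n S \<kappa> = card {H \<in> hfuncs n S. sat H \<kappa>}"

lemma sat_upd: "x \<notin> fst ` set \<kappa> \<Longrightarrow> sat (H(x := b)) \<kappa> \<longleftrightarrow> sat H \<kappa>"
  by (force simp: sat_def)

lemma NN_half:
  assumes "finite S" "x \<in> {1..n} \<times> S" "x \<notin> fst ` set \<kappa>"
  shows "NN n S \<kappa> = 2 * NN n S (\<kappa> @ [(x,b)])"
proof -
  have e: "{H \<in> hfuncs n S. sat H (\<kappa> @ [(x,b)])} = {H \<in> {H \<in> hfuncs n S. sat H \<kappa>}. H x = b}"
    by auto
  show ?thesis unfolding NN_def e
    by (rule halve[where f="\<lambda>H. H(x := \<not> H x)"])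
       (use assms in \<open>auto simp: sat_upd finite_hfuncs hfuncs_flip\<close>)
qed

lemma NN_split: "finite S \<Longrightarrow> NN n S \<kappa> = NN n S (\<kappa> @ [(x,True)]) + NN n S (\<kappa> @ [(x,False)])"
  unfolding NN_def
  by (subst card_Un_disjoint[symmetric]) (auto simp: finite_hfuncs intro!: arg_cong[where f=card])

lemma NN_restrict:
  assumes "finite S" "finite U" "U \<subseteq> {1..n} \<times> S - fst ` set \<kappa>"
  shows "card {H \<in> hfuncs n S. sat H \<kappa> \<and> (\<forall>y\<in>U. H y = g y)} * 2 ^ card U = NN n S \<kappa>"
  using assms(2,3)
proof (induction U rule: finite_induct)
  case empty
  then show ?case by (simp add: NN_def)
next
  case (insert y U)
  let ?S = "{H \<in> hfuncs n S. sat H \<kappa> \<and> (\<forall>y\<in>U. H y = g y)}"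
  have e: "{H \<in> hfuncs n S. sat H \<kappa> \<and> (\<forall>y\<in>insert y U. H y = g y)} = {H\<in>?S. H y = g y}"
    by auto
  have h: "card ?S = 2 * card {H\<in>?S. H y = g y}"
    by (rule halve[where f="\<lambda>H. H(y := \<not> H y)"])
       (use insert assms(1) in \<open>auto simp: sat_upd finite_hfuncs hfuncs_flip\<close>)
  have ih: "card ?S * 2 ^ card U = NN n S \<kappa>" using insert by simp
  have "card {H\<in>?S. H y = g y} * 2 ^ card (insert y U) = card ?S * 2 ^ card U"
    using insert(1,2) h by simp
  then show ?case using ih e by simp
qed


lemma card_bits_fix:
  fixes g :: "nat \<Rightarrow> bool"
  assumes "finite I" "I \<subseteq> {..<n}"
  shows "card {r. length r = n \<and> (\<forall>j\<in>I. r ! j = g j)} * 2 ^ card I = 2 ^ n"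
  using assms
proof (induction I rule: finite_induct)
  case empty
  have "card {r::bool list. length r = n} = 2 ^ n"
    using card_lists_length_eq[of "UNIV::bool set" n] by simp
  then show ?case by simp
next
  case (insert y I)
  let ?S = "{r. length r = n \<and> (\<forall>j\<in>I. r ! j = g j)}"
  have e: "{r. length r = n \<and> (\<forall>j\<in>insert y I. r ! j = g j)} = {r\<in>?S. r ! y = g y}"
    by auto
  have fin: "finite ?S" 
    by (rule finite_subset[OF _ finite_lists_length_eq[of "UNIV::bool set" n]]) auto
  have h: "card ?S = 2 * card {r\<in>?S. r ! y = g y}"
    by (rule halve[where f="\<lambda>r. r[y := \<not> r ! y]"])
       (use insert fin in \<open>auto simp: nth_list_update\<close>)
  have ih: "card ?S * 2 ^ card I = 2 ^ n" using insert by simp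
  have "card {r\<in>?S. r ! y = g y} * 2 ^ card (insert y I) = card ?S * 2 ^ card I"
    using insert(1,2) h by simp
  then show ?case using ih e by simp
qed

locale yz =
  fixes n :: nat and Sg :: "'a set" and Cd :: "'a list set" and ze ell L :: real
  assumes finS: "finite Sg" and CW: "Cd \<subseteq> words n Sg" and LR: "list_recoverable n Sg Cd ze ell L"
begin

definition kidx :: "'a transcript \<Rightarrow> 'a list \<Rightarrow> nat set" where
  "kidx \<kappa> v = {i\<in>{1..n}. (i, v!(i-1)) \<in> fst ` set \<kappa>}"
definition heavy :: "'a transcript \<Rightarrow> 'a list set" where
  "heavy \<kappa> = {v\<in>Cd. (1-ze)*real n \<le> real (card (kidx \<kappa> v))}"
definition mt :: "bool list \<Rightarrow> 'a transcript \<Rightarrow> 'a list \<Rightarrow> bool" where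
  "mt r \<kappa> v = (\<forall>p\<in>set \<kappa>. \<forall>i\<in>{1..n}. fst p = (i, v!(i-1)) \<longrightarrow> snd p = r!(i-1))"
definition unk :: "'a transcript \<Rightarrow> 'a list \<Rightarrow> nat" where
  "unk \<kappa> v = n - card (kidx \<kappa> v)"
definition Psi :: "bool list \<Rightarrow> 'a transcript \<Rightarrow> real" where
  "Psi r \<kappa> = (\<Sum>v\<in>heavy \<kappa>. if mt r \<kappa> v then (1/2::real)^unk \<kappa> v else 0)"
definition th :: real where
  "th = 2 powr (-(ze * real n))"
definition Phi :: "bool list \<Rightarrow> 'a transcript \<Rightarrow> real" where
  "Phi r \<kappa> = Psi r \<kappa> + th * (L - real (card (heavy \<kappa>)))"

lemma finite_Cd: "finite Cd"
proof -
  have "words n Sg \<subseteq> {xs. set xs \<subseteq> Sg \<and> length xs = n}" by (auto simp: words_def)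
  then have "finite (words n Sg)" using finite_lists_length_eq[OF finS, of n] finite_subset by blast
  then show ?thesis using CW finite_subset by blast
qed

lemma Cd_len: "v \<in> Cd \<Longrightarrow> length v = n"
  using CW by (auto simp: words_def)

lemma Cd_set: "v \<in> Cd \<Longrightarrow> i \<in> {1..n} \<Longrightarrow> v ! (i-1) \<in> Sg"
  using CW by (force simp: words_def)

lemma kidx_sub: "kidx \<kappa> v \<subseteq> {1..n}"
  by (auto simp: kidx_def)

lemma finite_kidx: "finite (kidx \<kappa> v)"
  using finite_subset[OF kidx_sub] by simp

lemma card_kidx: "card (kidx \<kappa> v) \<le> n"
  using card_mono[OF _ kidx_sub] by simp

lemma finite_heavy: "finite (heavy \<kappa>)"
  using finite_Cd by (auto simp: heavy_def)

lemma th_nonneg: "0 \<le> th" by (simp add: th_def)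

lemma heavy_bound:
  assumes "real (length \<kappa>) \<le> ell"
  shows "real (card (heavy \<kappa>)) \<le> L"
proof -
  define T where "T i = {\<sigma>\<in>Sg. (i,\<sigma>) \<in> fst ` set \<kappa>}" for i
  have cT: "real (card (T i)) \<le> ell" for i
  proof -
    have "card (T i) \<le> card (fst ` set \<kappa>)"
      by (rule card_inj_on_le[where f="\<lambda>\<sigma>. (i,\<sigma>)"]) (auto simp: T_def inj_on_def)
    also have "\<dots> \<le> card (set \<kappa>)" by (rule card_image_le) simp
    also have "\<dots> \<le> length \<kappa>" by (rule card_length)
    finally show ?thesis using assms by linarith
  qed
  have "real (card {v \<in> Cd. real (card {i\<in>{1..n}. v ! (i - 1) \<in> T i}) \<ge> (1 - ze) * real n}) \<le> L"
  proof -
    have "\<forall>i\<in>{1..n}. T i \<subseteq> Sg \<and> real (card (T i)) \<le> ell" using cT by (auto simp: T_def)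
    then show ?thesis using LR unfolding list_recoverable_def by blast
  qed
  moreover have "{v \<in> Cd. real (card {i\<in>{1..n}. v ! (i - 1) \<in> T i}) \<ge> (1 - ze) * real n} = heavy \<kappa>"
  proof -
    have "{i\<in>{1..n}. v ! (i - 1) \<in> T i} = kidx \<kappa> v" if "v \<in> Cd" for v
      using Cd_set[OF that] by (auto simp: T_def kidx_def)
    then show ?thesis by (auto simp: heavy_def)
  qed
  ultimately show ?thesis by simp
qed

lemma Psi_nonneg: "0 \<le> Psi r \<kappa>"
  unfolding Psi_def by (rule sum_nonneg) simp

lemma Phi_nonneg: "real (length \<kappa>) \<le> ell \<Longrightarrow> 0 \<le> Phi r \<kappa>"
  unfolding Phi_def using Psi_nonneg[of r \<kappa>] heavy_bound[of \<kappa>] th_nonneg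
  by (intro add_nonneg_nonneg mult_nonneg_nonneg) auto

lemma light_small:
  assumes "v \<in> Cd" "v \<notin> heavy \<kappa>"
  shows "(1/2::real) ^ unk \<kappa> v \<le> th"
proof -
  have lt: "real (card (kidx \<kappa> v)) < (1-ze)*real n" using assms by (auto simp: heavy_def)
  have c: "card (kidx \<kappa> v) \<le> n" by (rule card_kidx)
  have u: "real (unk \<kappa> v) = real n - real (card (kidx \<kappa> v))"
    unfolding unk_def using c by (simp add: of_nat_diff)
  have "(1-ze)*real n = real n - ze*real n" by (simp add: left_diff_distrib)
  then have "ze * real n \<le> real (unk \<kappa> v)" using lt u by linarith
  then have "2 powr (- real (unk \<kappa> v)) \<le> 2 powr (-(ze * real n))"
    by (intro powr_mono) auto
  moreover have "2 powr (- real (unk \<kappa> v)) = (1/2::real) ^ unk \<kappa> v"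
    by (simp add: powr_minus powr_realpow power_one_over inverse_eq_divide)
  ultimately show ?thesis by (simp add: th_def)
qed

end

context yz begin

definition tt :: "bool list \<Rightarrow> 'a transcript \<Rightarrow> 'a list \<Rightarrow> real" where
  "tt r \<kappa> v = (if mt r \<kappa> v then (1/2::real)^unk \<kappa> v else 0)"

lemma Psi_tt: "Psi r \<kappa> = (\<Sum>v\<in>heavy \<kappa>. tt r \<kappa> v)"
  by (simp add: Psi_def tt_def)

definition hit :: "'a list \<Rightarrow> nat \<times> 'a \<Rightarrow> bool" where
  "hit v x \<longleftrightarrow> fst x \<in> {1..n} \<and> snd x = v ! (fst x - 1)"

lemma kidx_app: "kidx (\<kappa> @ [(x,b)]) v = kidx \<kappa> v \<union> (if hit v x then {fst x} else {})"
  by (cases x) (auto simp: kidx_def hit_def)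

lemma mt_app: "mt r (\<kappa> @ [(x,b)]) v \<longleftrightarrow> mt r \<kappa> v \<and> (hit v x \<longrightarrow> b = r ! (fst x - 1))"
  by (cases x) (auto simp: mt_def hit_def)

lemma set_cong_Phi: 
  assumes "set \<kappa> = set \<kappa>'" shows "Phi r \<kappa> = Phi r \<kappa>'"
proof -
  have k: "kidx \<kappa> = kidx \<kappa>'" using assms by (simp add: kidx_def fun_eq_iff)
  have u: "unk \<kappa> = unk \<kappa>'" using k by (simp add: unk_def fun_eq_iff)
  have m: "mt r \<kappa> = mt r \<kappa>'" using assms by (simp add: mt_def fun_eq_iff)
  have h: "heavy \<kappa> = heavy \<kappa>'" using k by (simp add: heavy_def)
  show ?thesis unfolding Phi_def Psi_def h m u ..
qed

lemma hit_D: "v \<in> Cd \<Longrightarrow> hit v x \<Longrightarrow> x \<in> {1..n} \<times> Sg"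
  using Cd_set[of v "fst x"] by (cases x) (auto simp: hit_def)

lemma Phi_notD:
  assumes "x \<notin> {1..n} \<times> Sg"
  shows "Phi r (\<kappa> @ [(x,b)]) = Phi r \<kappa>"
proof -
  have nh: "v \<in> Cd \<Longrightarrow> \<not> hit v x" for v using hit_D assms by blast
  have k: "v \<in> Cd \<Longrightarrow> kidx (\<kappa> @ [(x,b)]) v = kidx \<kappa> v" for v using nh by (simp add: kidx_app)
  have m: "v \<in> Cd \<Longrightarrow> mt r (\<kappa> @ [(x,b)]) v = mt r \<kappa> v" for v using nh by (simp add: mt_app)
  have h: "heavy (\<kappa> @ [(x,b)]) = heavy \<kappa>" using k by (auto simp: heavy_def)
  have "Psi r (\<kappa> @ [(x,b)]) = Psi r \<kappa>"
    unfolding Psi_def h by (rule sum.cong) (auto simp: heavy_def k m unk_def)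
  then show ?thesis by (simp add: Phi_def h)
qed

lemma Phi_known:
  assumes "x \<in> fst ` set \<kappa>" "NN n Sg (\<kappa> @ [(x,b)]) \<noteq> 0"
  shows "Phi r (\<kappa> @ [(x,b)]) = Phi r \<kappa>"
proof -
  have "{H \<in> hfuncs n Sg. sat H (\<kappa> @ [(x,b)])} \<noteq> {}" using assms(2) unfolding NN_def by (metis card.empty)
  then obtain H where H: "sat H \<kappa>" "H x = b" by auto
  obtain b0 where b0: "(x,b0) \<in> set \<kappa>" using assms(1) by (metis fst_conv imageE prod.collapse)
  then have "b0 = b" using H unfolding sat_def by (metis fst_conv snd_conv)
  then have "set (\<kappa> @ [(x,b)]) = set \<kappa>" using \<open>(x,b0) \<in> set \<kappa>\<close> by auto
  then show ?thesis by (rule set_cong_Phi)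
qed

lemma tt_sum:
  assumes "v \<in> Cd" "x \<notin> fst ` set \<kappa>"
  shows "tt r (\<kappa> @ [(x,True)]) v + tt r (\<kappa> @ [(x,False)]) v = 2 * tt r \<kappa> v"
proof (cases "hit v x")
  case False
  then show ?thesis by (simp add: tt_def mt_app unk_def kidx_app)
next
  case True
  have nk: "fst x \<notin> kidx \<kappa> v" using True assms(2) by (cases x) (auto simp: kidx_def hit_def)
  have c: "card (kidx \<kappa> v) < n"
  proof -
    have "kidx \<kappa> v \<subset> {1..n}" using kidx_sub nk True by (auto simp: hit_def)
    then show ?thesis using psubset_card_mono[of "{1..n}" "kidx \<kappa> v"] by simp
  qed
  have u: "unk (\<kappa> @ [(x,b)]) v = unk \<kappa> v - 1" for b
    using True nk finite_kidx[of \<kappa> v] by (simp add: unk_def kidx_app)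
  have u1: "unk \<kappa> v \<ge> 1" using c by (simp add: unk_def)
  have p: "(1/2::real) ^ (unk \<kappa> v - Suc 0) = 2 * (1/2) ^ unk \<kappa> v"
  proof -
    obtain w where "unk \<kappa> v = Suc w" using u1 by (cases "unk \<kappa> v") auto
    then show ?thesis by simp
  qed
  show ?thesis
    by (cases "r ! (fst x - 1)") (auto simp: tt_def mt_app True u p)
qed

lemma Phi_half:
  assumes "x \<notin> fst ` set \<kappa>"
  shows "Phi r (\<kappa> @ [(x,True)]) + Phi r (\<kappa> @ [(x,False)]) \<le> 2 * Phi r \<kappa>"
proof -
  have k: "v \<in> Cd \<Longrightarrow> \<not> hit v x \<Longrightarrow> kidx (\<kappa> @ [(x,b)]) v = kidx \<kappa> v" for v b by (simp add: kidx_app)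
  have hb: "heavy (\<kappa> @ [(x,b)]) = heavy (\<kappa> @ [(x,c)])" for b c
    by (simp add: heavy_def kidx_app)
  define H' where "H' = heavy (\<kappa> @ [(x,True)])"
  have hF: "heavy (\<kappa> @ [(x,False)]) = H'" using hb H'_def by simp
  have sub: "heavy \<kappa> \<subseteq> H'"
  proof
    fix v assume "v \<in> heavy \<kappa>"
    have "kidx \<kappa> v \<subseteq> kidx (\<kappa> @ [(x,True)]) v" by (simp add: kidx_app)
    then have "card (kidx \<kappa> v) \<le> card (kidx (\<kappa> @ [(x,True)]) v)" by (rule card_mono[OF finite_kidx])
    then show "v \<in> H'" using \<open>v \<in> heavy \<kappa>\<close> unfolding H'_def heavy_def by auto
  qed
  have finH': "finite H'" unfolding H'_def by (rule finite_heavy)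
  define New where "New = H' - heavy \<kappa>"
  have NewCd: "New \<subseteq> Cd" unfolding New_def H'_def heavy_def by auto
  have NewL: "v \<in> New \<Longrightarrow> v \<notin> heavy \<kappa>" for v unfolding New_def by auto
  have splitb: "Psi r (\<kappa> @ [(x,b)]) = (\<Sum>v\<in>heavy \<kappa>. tt r (\<kappa> @ [(x,b)]) v) + (\<Sum>v\<in>New. tt r (\<kappa> @ [(x,b)]) v)" for b
  proof -
    have "heavy (\<kappa> @ [(x,b)]) = H'" using hb[of b True] H'_def by simp
    then show ?thesis unfolding Psi_tt New_def using sum.subset_diff[OF sub finH'] by (simp add: add.commute)
  qed
  have s1: "(\<Sum>v\<in>heavy \<kappa>. tt r (\<kappa> @ [(x,True)]) v) + (\<Sum>v\<in>heavy \<kappa>. tt r (\<kappa> @ [(x,False)]) v) = 2 * Psi r \<kappa>"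
    unfolding Psi_tt sum.distrib[symmetric] sum_distrib_left
  proof (rule sum.cong[OF refl])
    fix v assume "v \<in> heavy \<kappa>"
    then have "v \<in> Cd" by (simp add: heavy_def)
    then show "tt r (\<kappa> @ [(x, True)]) v + tt r (\<kappa> @ [(x, False)]) v = 2 * tt r \<kappa> v"
      by (rule tt_sum[OF _ assms])
  qed
  have s2: "(\<Sum>v\<in>New. tt r (\<kappa> @ [(x,True)]) v) + (\<Sum>v\<in>New. tt r (\<kappa> @ [(x,False)]) v) \<le> 2 * (th * real (card New))"
  proof -
    have "(\<Sum>v\<in>New. tt r (\<kappa> @ [(x,True)]) v) + (\<Sum>v\<in>New. tt r (\<kappa> @ [(x,False)]) v)
          = (\<Sum>v\<in>New. 2 * tt r \<kappa> v)"
      unfolding sum.distrib[symmetric]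
    proof (rule sum.cong[OF refl])
      fix v assume "v \<in> New"
      then have "v \<in> Cd" using NewCd by blast
      then show "tt r (\<kappa> @ [(x, True)]) v + tt r (\<kappa> @ [(x, False)]) v = 2 * tt r \<kappa> v"
        by (rule tt_sum[OF _ assms])
    qed
    also have "\<dots> \<le> (\<Sum>v\<in>New. 2 * th)"
    proof (rule sum_mono)
      fix v assume v: "v \<in> New"
      have "tt r \<kappa> v \<le> (1/2)^unk \<kappa> v" by (simp add: tt_def)
      also have "\<dots> \<le> th" using light_small[of v \<kappa>] v NewCd NewL by auto
      finally show "2 * tt r \<kappa> v \<le> 2 * th" by simp
    qed
    also have "\<dots> = 2 * (th * real (card New))" by simp
    finally show ?thesis .
  qed
  have cH: "card H' = card (heavy \<kappa>) + card New"
    unfolding New_def using card_Diff_subset[OF finite_subset[OF sub finH'] sub] card_mono[OF finH' sub] by simp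
  have e: "th * (L - real (card H')) = th * (L - real (card (heavy \<kappa>))) - th * real (card New)"
    by (simp add: cH algebra_simps)
  have "Phi r (\<kappa> @ [(x,True)]) + Phi r (\<kappa> @ [(x,False)]) =
     ((\<Sum>v\<in>heavy \<kappa>. tt r (\<kappa> @ [(x,True)]) v) + (\<Sum>v\<in>heavy \<kappa>. tt r (\<kappa> @ [(x,False)]) v))
   + ((\<Sum>v\<in>New. tt r (\<kappa> @ [(x,True)]) v) + (\<Sum>v\<in>New. tt r (\<kappa> @ [(x,False)]) v))
   + 2 * (th * (L - real (card H')))"
    unfolding Phi_def splitb hF H'_def[symmetric] by simp
  then show ?thesis unfolding Phi_def hF H'_def[symmetric] using s1 s2 e by (smt (verit))
qed

end

lemma intb: "(\<And>x. \<bar>f x\<bar> \<le> B) \<Longrightarrow> integrable (measure_pmf M) (f :: _ \<Rightarrow> real)"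
  by (intro measure_pmf.integrable_const_bound[where B=B]) auto

lemma yz_nth:
  assumes "yz_eq n Cd H v r" "i \<in> {1..n}"
  shows "H (i, v!(i-1)) = r!(i-1)"
proof -
  have mp: "map (\<lambda>i. H (Suc i, v ! i)) [0..<n] = r" using assms(1) by (simp add: yz_eq_def)
  have i: "i - 1 < n" "Suc (i - 1) = i" using assms(2) by auto
  have "r!(i-1) = (map (\<lambda>i. H (Suc i, v ! i)) [0..<n]) ! (i-1)" using mp by simp
  also have "\<dots> = H (Suc (i-1), v ! (i-1))" using i(1) by simp
  finally show ?thesis using i(2) by simp
qed

context yz begin

lemma comb:
  "real (NN n Sg (\<kappa>@[(x,True)])) * (Phi r (\<kappa>@[(x,True)]) + th) +
   real (NN n Sg (\<kappa>@[(x,False)])) * (Phi r (\<kappa>@[(x,False)]) + th)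
   \<le> real (NN n Sg \<kappa>) * (Phi r \<kappa> + th)"
proof (cases "x \<in> {1..n} \<times> Sg \<and> x \<notin> fst ` set \<kappa>")
  case True
  have hT: "NN n Sg \<kappa> = 2 * NN n Sg (\<kappa>@[(x,True)])" using NN_half finS True by blast
  have hF: "NN n Sg \<kappa> = 2 * NN n Sg (\<kappa>@[(x,False)])" using NN_half finS True by blast
  have e: "NN n Sg (\<kappa>@[(x,False)]) = NN n Sg (\<kappa>@[(x,True)])" using hT hF by simp
  have ph: "Phi r (\<kappa> @ [(x,True)]) + Phi r (\<kappa> @ [(x,False)]) \<le> 2 * Phi r \<kappa>"
    using Phi_half True by blast
  define N2 where "N2 = real (NN n Sg (\<kappa>@[(x,True)]))"
  have "N2 * (Phi r (\<kappa>@[(x,True)]) + th) + N2 * (Phi r (\<kappa>@[(x,False)]) + th)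
        = N2 * (Phi r (\<kappa> @ [(x,True)]) + Phi r (\<kappa> @ [(x,False)]) + 2 * th)"
    by (simp add: algebra_simps)
  also have "\<dots> \<le> N2 * (2 * Phi r \<kappa> + 2 * th)"
    using ph by (intro mult_left_mono) (auto simp: N2_def)
  also have "\<dots> = real (NN n Sg \<kappa>) * (Phi r \<kappa> + th)"
    using hT by (simp add: N2_def algebra_simps)
  finally show ?thesis using e N2_def by simp
next
  case False
  have q: "real (NN n Sg (\<kappa>@[(x,b)])) * (Phi r (\<kappa>@[(x,b)]) + th) = real (NN n Sg (\<kappa>@[(x,b)])) * (Phi r \<kappa> + th)" for b
  proof (cases "x \<in> {1..n} \<times> Sg")
    case True
    then have xk: "x \<in> fst ` set \<kappa>" using False by blast
    show ?thesis
    proof (cases "NN n Sg (\<kappa>@[(x,b)]) = 0")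
      case False
      then show ?thesis using Phi_known[OF xk False] by simp
    qed simp
  next
    case False
    then show ?thesis using Phi_notD by simp
  qed
  have "NN n Sg \<kappa> = NN n Sg (\<kappa>@[(x,True)]) + NN n Sg (\<kappa>@[(x,False)])"
    using NN_split finS by blast
  then show ?thesis unfolding q by (simp add: algebra_simps)
qed

lemma base:
  assumes "real (length \<kappa>) \<le> ell" "length r = n"
  shows "real (card {H \<in> hfuncs n Sg. sat H \<kappa> \<and> yz_eq n Cd H v r}) \<le> real (NN n Sg \<kappa>) * (Phi r \<kappa> + th)"
proof -
  have rhs: "0 \<le> real (NN n Sg \<kappa>) * (Phi r \<kappa> + th)"
    using Phi_nonneg[OF assms(1), of r] th_nonneg by simp
  show ?thesis
  proof (cases "v \<in> Cd \<and> mt r \<kappa> v")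
    case False
    have e: "{H \<in> hfuncs n Sg. sat H \<kappa> \<and> yz_eq n Cd H v r} = {}"
    proof (rule ccontr)
      assume "{H \<in> hfuncs n Sg. sat H \<kappa> \<and> yz_eq n Cd H v r} \<noteq> {}"
      then obtain H where H: "sat H \<kappa>" "yz_eq n Cd H v r" by auto
      then have vC: "v \<in> Cd" and lv: "length v = n" and mp: "map (\<lambda>i. H (Suc i, v ! i)) [0..<n] = r"
        by (auto simp: yz_eq_def)
      have "mt r \<kappa> v"
        unfolding mt_def
      proof (intro ballI impI)
        fix p i assume p: "p \<in> set \<kappa>" "i \<in> {1..n}" "fst p = (i, v ! (i - 1))"
        have "snd p = H (fst p)" using H(1) p(1) by (simp add: sat_def)
        also have "\<dots> = r ! (i-1)" using yz_nth[OF H(2) p(2)] p by simp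
        finally show "snd p = r ! (i - 1)" .
      qed
      then show False using False vC by blast
    qed
    show ?thesis unfolding e using rhs by simp
  next
    case True
    then have vC: "v \<in> Cd" and m: "mt r \<kappa> v" by auto
    define U where "U = (\<lambda>i. (i, v!(i-1))) ` ({1..n} - kidx \<kappa> v)"
    define g where "g y = r ! (fst y - 1)" for y :: "nat \<times> 'a"
    have finU: "finite U" by (simp add: U_def)
    have cU: "card U = unk \<kappa> v"
    proof -
      have "card U = card ({1..n} - kidx \<kappa> v)" unfolding U_def
        by (rule card_image) (auto simp: inj_on_def)
      also have "\<dots> = n - card (kidx \<kappa> v)" using kidx_sub finite_kidx by (simp add: card_Diff_subset)
      finally show ?thesis by (simp add: unk_def)
    qed
    have UD: "U \<subseteq> {1..n} \<times> Sg - fst ` set \<kappa>"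
      unfolding U_def using Cd_set[OF vC] by (auto simp: kidx_def)
    have sub: "{H \<in> hfuncs n Sg. sat H \<kappa> \<and> yz_eq n Cd H v r} \<subseteq> {H \<in> hfuncs n Sg. sat H \<kappa> \<and> (\<forall>y\<in>U. H y = g y)}"
    proof
      fix H assume "H \<in> {H \<in> hfuncs n Sg. sat H \<kappa> \<and> yz_eq n Cd H v r}"
      then have H: "H \<in> hfuncs n Sg" "sat H \<kappa>" "yz_eq n Cd H v r" by auto
      have "\<forall>y\<in>U. H y = g y"
      proof
        fix y assume y: "y \<in> U"
        obtain i where i: "i \<in> {1..n}" "y = (i, v!(i-1))" using y U_def by auto
        show "H y = g y" using yz_nth[OF H(3) i(1)] i by (simp add: g_def)
      qed
      then show "H \<in> {H \<in> hfuncs n Sg. sat H \<kappa> \<and> (\<forall>y\<in>U. H y = g y)}" using H by auto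
    qed
    have fin: "finite {H \<in> hfuncs n Sg. sat H \<kappa> \<and> (\<forall>y\<in>U. H y = g y)}"
      using finite_hfuncs[OF finS] by simp
    have cnt: "card {H \<in> hfuncs n Sg. sat H \<kappa> \<and> (\<forall>y\<in>U. H y = g y)} * 2 ^ unk \<kappa> v = NN n Sg \<kappa>"
      using NN_restrict[OF finS finU UD] cU by simp
    have "real (card {H \<in> hfuncs n Sg. sat H \<kappa> \<and> yz_eq n Cd H v r}) \<le> real (card {H \<in> hfuncs n Sg. sat H \<kappa> \<and> (\<forall>y\<in>U. H y = g y)})"
      using card_mono[OF fin sub] by simp
    also have "\<dots> = real (NN n Sg \<kappa>) * (1/2)^unk \<kappa> v"
      using arg_cong[OF cnt, of real] by (simp add: field_simps)
    also have "\<dots> \<le> real (NN n Sg \<kappa>) * (Phi r \<kappa> + th)"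
    proof (rule mult_left_mono)
      show "(1/2::real)^unk \<kappa> v \<le> Phi r \<kappa> + th"
      proof (cases "v \<in> heavy \<kappa>")
        case True
        have "(1/2::real)^unk \<kappa> v = tt r \<kappa> v" using m by (simp add: tt_def)
        also have "\<dots> \<le> Psi r \<kappa>" unfolding Psi_tt
          by (rule member_le_sum[OF True]) (auto simp: tt_def finite_heavy)
        also have "\<dots> \<le> Phi r \<kappa>" unfolding Phi_def using heavy_bound[OF assms(1)] th_nonneg by simp
        finally show ?thesis using th_nonneg by simp
      next
        case False
        then show ?thesis using light_small[OF vC False] Phi_nonneg[OF assms(1), of r] by simp
      qed
    qed simp
    finally show ?thesis .
  qed
qed

end

context yz begin

definition succ :: "('a transcript \<Rightarrow> (nat \<times> 'a) pmf) \<Rightarrow> ('a transcript \<Rightarrow> 'a list pmf) \<Rightarrow> bool list \<Rightarrow> 'a hfun \<Rightarrow> nat \<Rightarrow> 'a transcript \<Rightarrow> real" where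
 "succ nqf outf r H k h = pmf (run_queries nqf H k h \<bind> (\<lambda>h'. outf h' \<bind> (\<lambda>v. return_pmf (yz_eq n Cd H v r)))) True"

lemma succ_0: "succ nqf outf r H 0 h = measure_pmf.expectation (outf h) (\<lambda>v. if yz_eq n Cd H v r then 1 else 0)"
  by (simp add: succ_def pmf_bind indicator_def of_bool_def)

lemma succ_Suc: "succ nqf outf r H (Suc k) h = measure_pmf.expectation (nqf h) (\<lambda>x. succ nqf outf r H k (h@[(x, H x)]))"
  by (simp add: succ_def bind_assoc_pmf pmf_bind)

lemma succ_bound: "\<bar>succ nqf outf r H k h\<bar> \<le> 1"
  by (simp add: succ_def pmf_le_1)

lemma if_integral: "(if P then measure_pmf.expectation M f else 0) = measure_pmf.expectation M (\<lambda>x. if P then f x else (0::real))"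
  by simp

lemma main:
  assumes "length r = n"
  shows "real (length \<kappa>) + real k \<le> ell \<Longrightarrow>
    (\<Sum>H\<in>hfuncs n Sg. if sat H \<kappa> then succ nqf outf r H k h else 0) \<le> real (NN n Sg \<kappa>) * (Phi r \<kappa> + th)"
proof (induction k arbitrary: h \<kappa>)
  case 0
  have "(\<Sum>H\<in>hfuncs n Sg. if sat H \<kappa> then succ nqf outf r H 0 h else 0)
     = (\<Sum>H\<in>hfuncs n Sg. measure_pmf.expectation (outf h) (\<lambda>v. if sat H \<kappa> then (if yz_eq n Cd H v r then 1 else 0) else (0::real)))"
    unfolding succ_0 if_integral ..
  also have "\<dots> = measure_pmf.expectation (outf h) (\<lambda>v. \<Sum>H\<in>hfuncs n Sg. if sat H \<kappa> then (if yz_eq n Cd H v r then 1 else 0) else (0::real))"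
    by (rule sym, rule Bochner_Integration.integral_sum[where f="\<lambda>H v. if sat H \<kappa> then (if yz_eq n Cd H v r then 1 else 0) else (0::real)"]) (rule intb[where B=1], simp)
  also have "\<dots> \<le> measure_pmf.expectation (outf h) (\<lambda>v. real (NN n Sg \<kappa>) * (Phi r \<kappa> + th))"
  proof (rule integral_mono)
    show "integrable (measure_pmf (outf h)) (\<lambda>v. \<Sum>H\<in>hfuncs n Sg. if sat H \<kappa> then (if yz_eq n Cd H v r then 1 else 0) else (0::real))"
      by (rule intb[where B="real (card (hfuncs n Sg))"]) (rule order_trans[OF sum_abs], rule order_trans[OF sum_mono[where g="\<lambda>_. 1"]], auto)
    show "integrable (measure_pmf (outf h)) (\<lambda>v. real (NN n Sg \<kappa>) * (Phi r \<kappa> + th))" by simp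
    fix v
    have "(\<Sum>H\<in>hfuncs n Sg. if sat H \<kappa> then (if yz_eq n Cd H v r then 1 else 0) else (0::real))
        = (\<Sum>H\<in>hfuncs n Sg. if sat H \<kappa> \<and> yz_eq n Cd H v r then 1 else 0)"
      by (rule sum.cong) auto
    also have "\<dots> = real (card {H \<in> hfuncs n Sg. sat H \<kappa> \<and> yz_eq n Cd H v r})"
      using finite_hfuncs[OF finS] by (simp add: sum.inter_filter[symmetric])
    also have "\<dots> \<le> real (NN n Sg \<kappa>) * (Phi r \<kappa> + th)"
      by (rule base) (use 0 assms in auto)
    finally show "(\<Sum>H\<in>hfuncs n Sg. if sat H \<kappa> then (if yz_eq n Cd H v r then 1 else 0) else (0::real)) \<le> real (NN n Sg \<kappa>) * (Phi r \<kappa> + th)" .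
  qed
  also have "\<dots> = real (NN n Sg \<kappa>) * (Phi r \<kappa> + th)" by simp
  finally show ?case .
next
  case (Suc k)
  define s where "s H x = succ nqf outf r H k (h @ [(x, H x)])" for H x
  have "(\<Sum>H\<in>hfuncs n Sg. if sat H \<kappa> then succ nqf outf r H (Suc k) h else 0)
     = (\<Sum>H\<in>hfuncs n Sg. measure_pmf.expectation (nqf h) (\<lambda>x. if sat H \<kappa> then s H x else 0))"
    unfolding succ_Suc if_integral s_def ..
  also have "\<dots> = measure_pmf.expectation (nqf h) (\<lambda>x. \<Sum>H\<in>hfuncs n Sg. if sat H \<kappa> then s H x else 0)"
    by (rule sym, rule Bochner_Integration.integral_sum[where f="\<lambda>H x. if sat H \<kappa> then s H x else 0"]) (rule intb[where B=1], simp add: s_def succ_bound)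
  also have "\<dots> \<le> measure_pmf.expectation (nqf h) (\<lambda>x. real (NN n Sg \<kappa>) * (Phi r \<kappa> + th))"
  proof (rule integral_mono)
    show "integrable (measure_pmf (nqf h)) (\<lambda>x. \<Sum>H\<in>hfuncs n Sg. if sat H \<kappa> then s H x else 0)"
      by (rule intb[where B="real (card (hfuncs n Sg))"]) 
         (rule order_trans[OF sum_abs], rule order_trans[OF sum_mono[where g="\<lambda>_. 1"]], auto simp: s_def succ_bound)
    show "integrable (measure_pmf (nqf h)) (\<lambda>v. real (NN n Sg \<kappa>) * (Phi r \<kappa> + th))" by simp
    fix x
    define t where "t b H = (if sat H (\<kappa> @ [(x,b)]) then succ nqf outf r H k (h @ [(x,b)]) else 0)" for b H
    have "(\<Sum>H\<in>hfuncs n Sg. if sat H \<kappa> then s H x else 0) = (\<Sum>H\<in>hfuncs n Sg. t True H + t False H)"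
      by (rule sum.cong) (auto simp: t_def s_def)
    also have "\<dots> = (\<Sum>H\<in>hfuncs n Sg. t True H) + (\<Sum>H\<in>hfuncs n Sg. t False H)"
      by (rule sum.distrib)
    also have "\<dots> \<le> real (NN n Sg (\<kappa>@[(x,True)])) * (Phi r (\<kappa>@[(x,True)]) + th) +
                    real (NN n Sg (\<kappa>@[(x,False)])) * (Phi r (\<kappa>@[(x,False)]) + th)"
      unfolding t_def by (intro add_mono Suc.IH) (use Suc.prems in auto)
    also have "\<dots> \<le> real (NN n Sg \<kappa>) * (Phi r \<kappa> + th)"
      by (rule comb)
    finally show "(\<Sum>H\<in>hfuncs n Sg. if sat H \<kappa> then s H x else 0) \<le> real (NN n Sg \<kappa>) * (Phi r \<kappa> + th)" .
  qed
  also have "\<dots> = real (NN n Sg \<kappa>) * (Phi r \<kappa> + th)" by simp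
  finally show ?case .
qed

end

lemma card_bitstrings: "card (bitstrings n) = 2 ^ n"
  using card_lists_length_eq[of "UNIV::bool set" n] by (simp add: bitstrings_def)

lemma finite_bitstrings: "finite (bitstrings n)"
  using finite_lists_length_eq[of "UNIV::bool set" n] by (simp add: bitstrings_def)

lemma bitstrings_ne: "bitstrings n \<noteq> {}"
  by (auto simp: bitstrings_def intro!: exI[of _ "replicate n False"])

context yz begin

lemma count_mt:
  shows "real (card {r\<in>bitstrings n. mt r \<rho> v}) \<le> 2 ^ unk \<rho> v"
proof -
  define I where "I = {j. j < n \<and> Suc j \<in> kidx \<rho> v}"
  define g where "g j = snd (SOME p. p \<in> set \<rho> \<and> fst p = (Suc j, v!j))" for j
  have finI: "finite I" "I \<subseteq> {..<n}" by (auto simp: I_def)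
  have cI: "card I = card (kidx \<rho> v)"
  proof -
    have "kidx \<rho> v = Suc ` I"
    proof
      show "kidx \<rho> v \<subseteq> Suc ` I"
      proof
        fix i assume i: "i \<in> kidx \<rho> v"
        then have i1: "i \<in> {1..n}" using kidx_sub by blast
        then have "Suc (i - 1) = i" "i - 1 < n" by auto
        then show "i \<in> Suc ` I" using i unfolding I_def by (metis (mono_tags, lifting) image_eqI mem_Collect_eq)
      qed
      show "Suc ` I \<subseteq> kidx \<rho> v" unfolding I_def by auto
    qed
    then show ?thesis by (simp add: card_image)
  qed
  have sub: "{r\<in>bitstrings n. mt r \<rho> v} \<subseteq> {r. length r = n \<and> (\<forall>j\<in>I. r ! j = g j)}"
  proof
    fix r assume "r \<in> {r\<in>bitstrings n. mt r \<rho> v}"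
    then have r: "r \<in> bitstrings n" "mt r \<rho> v" by auto
    have "\<forall>j\<in>I. r ! j = g j"
    proof
    fix j assume j: "j \<in> I"
    then have "(Suc j, v!j) \<in> fst ` set \<rho>" "Suc j \<in> {1..n}" by (auto simp: I_def kidx_def)
    then have ex: "\<exists>p. p \<in> set \<rho> \<and> fst p = (Suc j, v!j)" by auto
    define p where "p = (SOME p. p \<in> set \<rho> \<and> fst p = (Suc j, v!j))"
    have p: "p \<in> set \<rho> \<and> fst p = (Suc j, v!j)"
      unfolding p_def by (rule someI_ex[OF ex])
    have "\<forall>p\<in>set \<rho>. \<forall>i\<in>{1..n}. fst p = (i, v!(i-1)) \<longrightarrow> snd p = r!(i-1)" using r(2) unfolding mt_def .
    then have "fst p = (Suc j, v!(Suc j - 1)) \<longrightarrow> snd p = r!(Suc j - 1)"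
      using p \<open>Suc j \<in> {1..n}\<close> by blast
    then show "r ! j = g j" using p unfolding g_def p_def[symmetric] by simp
    qed
    then show "r \<in> {r. length r = n \<and> (\<forall>j\<in>I. r ! j = g j)}" using r(1) by (simp add: bitstrings_def)
  qed
  have fin: "finite {r. length r = n \<and> (\<forall>j\<in>I. r ! j = g j)}"
    by (rule finite_subset[OF _ finite_lists_length_eq[of "UNIV::bool set" n]]) auto
  have cnt: "card {r. length r = n \<and> (\<forall>j\<in>I. r ! j = g j)} * 2 ^ card I = 2 ^ n"
    by (rule card_bits_fix[OF finI])
  have le: "card I \<le> n" using cI card_kidx by simp
  have "card {r. length r = n \<and> (\<forall>j\<in>I. r ! j = g j)} = 2 ^ (n - card I)"
  proof -
    have "(2::nat) ^ n = 2 ^ (n - card I) * 2 ^ card I" using le by (simp add: power_add[symmetric])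
    then show ?thesis using cnt by simp
  qed
  then have "card {r\<in>bitstrings n. mt r \<rho> v} \<le> 2 ^ unk \<rho> v"
    using card_mono[OF fin sub] cI by (simp add: unk_def)
  then show ?thesis by (metis of_nat_le_iff of_nat_numeral of_nat_power)
qed

lemma sum_r_tt: "(\<Sum>r\<in>bitstrings n. tt r \<rho> v) \<le> 1"
proof -
  have "(\<Sum>r\<in>bitstrings n. tt r \<rho> v) = (\<Sum>r\<in>{r\<in>bitstrings n. mt r \<rho> v}. (1/2::real)^unk \<rho> v)"
    unfolding tt_def by (rule sum.inter_filter[symmetric, OF finite_bitstrings])
  also have "\<dots> = real (card {r\<in>bitstrings n. mt r \<rho> v}) * (1/2)^unk \<rho> v" by simp
  also have "\<dots> \<le> 2 ^ unk \<rho> v * (1/2)^unk \<rho> v"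
    by (rule mult_right_mono[OF count_mt]) simp
  also have "\<dots> = 1" by (simp add: power_one_over)
  finally show ?thesis .
qed

definition dl :: real where "dl = L * ((1/2)^n + th) + th"

lemma avg_Phi:
  assumes "real (length \<rho>) \<le> ell"
  shows "(\<Sum>r\<in>bitstrings n. Phi r \<rho> + th) \<le> 2 ^ n * dl"
proof -
  have hL: "real (card (heavy \<rho>)) \<le> L" by (rule heavy_bound[OF assms])
  have "(\<Sum>r\<in>bitstrings n. Psi r \<rho>) = (\<Sum>v\<in>heavy \<rho>. \<Sum>r\<in>bitstrings n. tt r \<rho> v)"
    unfolding Psi_tt by (rule sum.swap)
  also have "\<dots> \<le> (\<Sum>v\<in>heavy \<rho>. 1)" by (rule sum_mono) (rule sum_r_tt)
  finally have ps: "(\<Sum>r\<in>bitstrings n. Psi r \<rho>) \<le> real (card (heavy \<rho>))" by simp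
  have "(\<Sum>r\<in>bitstrings n. Phi r \<rho> + th) = (\<Sum>r\<in>bitstrings n. Psi r \<rho> + (th * (L - real (card (heavy \<rho>))) + th))"
    unfolding Phi_def by (simp add: add.assoc)
  also have "\<dots> = (\<Sum>r\<in>bitstrings n. Psi r \<rho>) + (\<Sum>r\<in>bitstrings n. (th * (L - real (card (heavy \<rho>))) + th))"
    by (rule sum.distrib)
  also have "\<dots> = (\<Sum>r\<in>bitstrings n. Psi r \<rho>) + 2^n * (th * (L - real (card (heavy \<rho>))) + th)"
    by (simp add: card_bitstrings)
  also have "\<dots> \<le> real (card (heavy \<rho>)) + 2^n * (th * (L - real (card (heavy \<rho>))) + th)"
    using ps by simp
  also have "\<dots> \<le> 2 ^ n * dl"
  proof -
    have t0: "0 \<le> th" by (rule th_nonneg)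
    have "2^n * (th * real (card (heavy \<rho>))) \<ge> 0" using t0 by simp
    have "real (card (heavy \<rho>)) = 2^n * ((1/2)^n * real (card (heavy \<rho>)))" by (simp add: power_one_over)
    also have "\<dots> \<le> 2^n * ((1/2)^n * L)" using hL by (intro mult_left_mono) auto
    finally have a: "real (card (heavy \<rho>)) \<le> 2^n * ((1/2)^n * L)" .
    have b: "th * (L - real (card (heavy \<rho>))) \<le> th * L" using t0 by (simp add: mult_left_mono)
    have "real (card (heavy \<rho>)) + 2^n * (th * (L - real (card (heavy \<rho>))) + th) \<le> 2^n * ((1/2)^n * L) + 2^n * (th * L + th)"
      using a b t0 by (intro add_mono mult_left_mono) auto
    also have "\<dots> = 2 ^ n * dl" by (simp add: dl_def algebra_simps)
    finally show ?thesis .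
  qed
  finally show ?thesis .
qed

lemma lemmaA:
  assumes "real (length \<rho>) + real k \<le> ell" "0 \<le> real k"
  shows "(\<Sum>r\<in>bitstrings n. \<Sum>H\<in>hfuncs n Sg. if sat H \<rho> then succ (nqr r) (outr r) r H k [] else 0)
     \<le> 2 ^ n * real (NN n Sg \<rho>) * dl"
proof -
  have "(\<Sum>r\<in>bitstrings n. \<Sum>H\<in>hfuncs n Sg. if sat H \<rho> then succ (nqr r) (outr r) r H k [] else 0)
     \<le> (\<Sum>r\<in>bitstrings n. real (NN n Sg \<rho>) * (Phi r \<rho> + th))"
    by (rule sum_mono, rule main) (use assms in \<open>auto simp: bitstrings_def\<close>)
  also have "\<dots> = real (NN n Sg \<rho>) * (\<Sum>r\<in>bitstrings n. Phi r \<rho> + th)"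
    by (simp add: sum_distrib_left)
  also have "\<dots> \<le> real (NN n Sg \<rho>) * (2 ^ n * dl)"
    by (rule mult_left_mono[OF avg_Phi]) (use assms in auto)
  finally show ?thesis by (simp add: algebra_simps)
qed

end

fun run' :: "('a transcript \<Rightarrow> (nat \<times> 'a) pmf) \<Rightarrow> nat \<Rightarrow> 'a transcript \<Rightarrow> 'a transcript pmf" where
  "run' nqf 0 h = return_pmf h"
| "run' nqf (Suc k) h = nqf h \<bind> (\<lambda>x. pmf_of_set (UNIV::bool set) \<bind> (\<lambda>b. run' nqf k (h @ [(x, b)])))"

lemma run'_support: "h' \<in> set_pmf (run' nqf k h) \<Longrightarrow> \<exists>rest. h' = h @ rest \<and> length rest = k"
proof (induction k arbitrary: h)
  case 0
  then show ?case by simp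
next
  case (Suc k)
  then obtain x b where "h' \<in> set_pmf (run' nqf k (h @ [(x,b)]))"
    by (auto simp: set_bind_pmf)
  from Suc.IH[OF this] obtain rest where "h' = (h @ [(x,b)]) @ rest" "length rest = k" by blast
  then show ?case by (intro exI[of _ "(x,b) # rest"]) simp
qed

lemma pmf_True_zero:
  assumes "\<And>y. y \<in> set_pmf M \<Longrightarrow> f y = return_pmf False"
  shows "pmf (M \<bind> f) True = 0"
proof -
  have "True \<notin> set_pmf (M \<bind> f)"
  proof
    assume "True \<in> set_pmf (M \<bind> f)"
    then obtain y where "y \<in> set_pmf M" "True \<in> set_pmf (f y)" unfolding set_bind_pmf by blast
    then show False using assms by simp
  qed
  then show ?thesis by (simp add: pmf_eq_0_set_pmf)
qed

lemma integral_bool: "measure_pmf.expectation (pmf_of_set (UNIV::bool set)) f = (f True + f False) / (2::real)"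
  by (subst integral_pmf_of_set) (auto simp: UNIV_bool)

lemma rel:
  "sat H h \<Longrightarrow> pmf (run_queries nqf H k h \<bind> g) True =
     2 ^ k * pmf (run' nqf k h \<bind> (\<lambda>h'. if sat H h' then g h' else return_pmf False)) True"
proof (induction k arbitrary: h)
  case 0
  then show ?case by (simp add: bind_return_pmf)
next
  case (Suc k)
  define g' where "g' = (\<lambda>h'. if sat H h' then g h' else return_pmf False)"
  define f where "f x b = pmf (run' nqf k (h @ [(x,b)]) \<bind> g') True" for x b
  have z: "f x b = 0" if "b \<noteq> H x" for x b
    unfolding f_def
  proof (rule pmf_True_zero[where M="run' nqf k (h @ [(x,b)])" and f=g'])
    fix y assume "y \<in> set_pmf (run' nqf k (h @ [(x, b)]))"
    from run'_support[OF this] obtain rest where "y = (h @ [(x,b)]) @ rest" by blast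
    then have "\<not> sat H y" using that by simp
    then show "g' y = return_pmf False" by (simp add: g'_def)
  qed
  have "pmf (run_queries nqf H (Suc k) h \<bind> g) True
      = measure_pmf.expectation (nqf h) (\<lambda>x. pmf (run_queries nqf H k (h @ [(x, H x)]) \<bind> g) True)"
    by (simp add: bind_assoc_pmf pmf_bind)
  also have "\<dots> = measure_pmf.expectation (nqf h) (\<lambda>x. 2 ^ k * f x (H x))"
    using Suc.prems by (simp add: Suc.IH f_def g'_def)
  also have "\<dots> = measure_pmf.expectation (nqf h) (\<lambda>x. 2 ^ Suc k * ((f x True + f x False) / 2))"
  proof (rule Bochner_Integration.integral_cong[OF refl])
    fix x
    show "2 ^ k * f x (H x) = 2 ^ Suc k * ((f x True + f x False) / 2)"
      by (cases "H x") (auto simp: z)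
  qed
  also have "\<dots> = 2 ^ Suc k * measure_pmf.expectation (nqf h) (\<lambda>x. measure_pmf.expectation (pmf_of_set (UNIV::bool set)) (f x))"
    by (simp add: integral_bool)
  also have "\<dots> = 2 ^ Suc k * pmf (run' nqf (Suc k) h \<bind> g') True"
    by (simp add: bind_assoc_pmf pmf_bind f_def[abs_def])
  finally show ?case by (simp add: g'_def)
qed

definition vp :: "nat \<Rightarrow> 'a list \<Rightarrow> bool list \<Rightarrow> 'a transcript" where
  "vp n v r = map (\<lambda>i. ((Suc i, v!i), r!i)) [0..<n]"

definition sat' :: "'a hfun \<Rightarrow> 'a transcript option \<Rightarrow> bool" where
  "sat' H \<omega> = (case \<omega> of None \<Rightarrow> False | Some \<rho> \<Rightarrow> sat H \<rho>)"

fun comb2 :: "'a transcript option \<Rightarrow> 'a transcript option \<Rightarrow> 'a transcript option" where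
  "comb2 (Some a) (Some b) = Some (a @ b)"
| "comb2 _ _ = None"

lemma sat'_comb2: "sat' H (comb2 a b) \<longleftrightarrow> sat' H a \<and> sat' H b"
  by (cases a; cases b) (auto simp: sat'_def)

definition PH :: "'a hfun \<Rightarrow> 'a transcript option pmf \<Rightarrow> real" where
  "PH H M = pmf (M \<bind> (\<lambda>\<omega>. return_pmf (sat' H \<omega>))) True"

lemma sat'_if[simp]: "sat' H (if P then Some x else None) \<longleftrightarrow> P \<and> sat H x"
  by (simp add: sat'_def)

lemma PH_int: "PH H M = measure_pmf.expectation M (\<lambda>\<omega>. of_bool (sat' H \<omega>))"
  by (simp add: PH_def pmf_bind indicator_def)

lemma PH_comb: "PH H (M \<bind> (\<lambda>a. N \<bind> (\<lambda>b. return_pmf (comb2 a b)))) = PH H M * PH H N"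
proof -
  have "PH H (M \<bind> (\<lambda>a. N \<bind> (\<lambda>b. return_pmf (comb2 a b))))
     = measure_pmf.expectation M (\<lambda>a. measure_pmf.expectation N (\<lambda>b. of_bool (sat' H a) * of_bool (sat' H b)))"
    unfolding PH_def by (simp add: bind_assoc_pmf bind_return_pmf pmf_bind sat'_comb2 indicator_def of_bool_conj)
  also have "\<dots> = measure_pmf.expectation M (\<lambda>a. of_bool (sat' H a) * PH H N)"
    by (simp add: PH_int)
  also have "\<dots> = PH H M * PH H N" by (simp add: PH_int)
  finally show ?thesis .
qed

locale yz2 = yz +
  fixes q :: nat and nqr :: "bool list \<Rightarrow> 'a transcript \<Rightarrow> (nat \<times> 'a) pmf"
    and outr :: "bool list \<Rightarrow> 'a transcript \<Rightarrow> 'a list pmf"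
begin

definition Y :: "'a hfun \<Rightarrow> real" where
  "Y H = (\<Sum>r\<in>bitstrings n. succ (nqr r) (outr r) r H q []) / 2 ^ n"

definition MY :: "'a transcript option pmf" where
  "MY = pmf_of_set (bitstrings n) \<bind> (\<lambda>r. run' (nqr r) q [] \<bind>
          (\<lambda>h'. map_pmf (\<lambda>v. if v \<in> Cd then Some (h' @ vp n v r) else None) (outr r h')))"

lemma Y_nonneg: "0 \<le> Y H"
  unfolding Y_def by (intro divide_nonneg_nonneg sum_nonneg) (auto simp: succ_def)

lemma Y_le1: "Y H \<le> 1"
proof -
  have "(\<Sum>r\<in>bitstrings n. succ (nqr r) (outr r) r H q []) \<le> (\<Sum>r\<in>bitstrings n. 1)"
    by (rule sum_mono) (simp add: succ_def pmf_le_1)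
  then show ?thesis unfolding Y_def by (simp add: card_bitstrings)
qed

lemma yz_vp:
  assumes "length r = n"
  shows "yz_eq n Cd H v r \<longleftrightarrow> v \<in> Cd \<and> sat H (vp n v r)"
proof -
  have "sat H (vp n v r) \<longleftrightarrow> (\<forall>i<n. H (Suc i, v!i) = r!i)"
    by (auto simp: sat_def vp_def)
  moreover have "map (\<lambda>i. H (Suc i, v ! i)) [0..<n] = r \<longleftrightarrow> (\<forall>i<n. H (Suc i, v!i) = r!i)"
    using assms by (auto simp: list_eq_iff_nth_eq)
  ultimately show ?thesis using Cd_len by (auto simp: yz_eq_def)
qed

lemma Y_form: "Y H = 2 ^ q * PH H MY"
proof -
  have inner: "succ (nqr r) (outr r) r H q [] = 2 ^ q * PH H (run' (nqr r) q [] \<bind>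
          (\<lambda>h'. map_pmf (\<lambda>v. if v \<in> Cd then Some (h' @ vp n v r) else None) (outr r h')))"
    if r: "r \<in> bitstrings n" for r
  proof -
    have lr: "length r = n" using r by (simp add: bitstrings_def)
    have "succ (nqr r) (outr r) r H q [] = 2 ^ q * pmf (run' (nqr r) q [] \<bind>
        (\<lambda>h'. if sat H h' then outr r h' \<bind> (\<lambda>v. return_pmf (yz_eq n Cd H v r)) else return_pmf False)) True"
      unfolding succ_def by (rule rel) simp
    also have "\<dots> = 2 ^ q * PH H (run' (nqr r) q [] \<bind>
          (\<lambda>h'. map_pmf (\<lambda>v. if v \<in> Cd then Some (h' @ vp n v r) else None) (outr r h')))"
    proof -
      have "pmf (if sat H h' then outr r h' \<bind> (\<lambda>v. return_pmf (yz_eq n Cd H v r)) else return_pmf False) True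
          = pmf (map_pmf (\<lambda>v. if v \<in> Cd then Some (h' @ vp n v r) else None) (outr r h') \<bind> (\<lambda>\<omega>. return_pmf (sat' H \<omega>))) True" for h'
      proof (cases "sat H h'")
        case True
        then show ?thesis
          by (simp add: map_pmf_def bind_assoc_pmf bind_return_pmf pmf_bind yz_vp[OF lr] indicator_def)
      next
        case False
        then show ?thesis
          by (simp add: map_pmf_def bind_assoc_pmf bind_return_pmf pmf_bind indicator_def)
      qed
      then show ?thesis unfolding PH_def by (simp add: bind_assoc_pmf pmf_bind)
    qed
    finally show ?thesis .
  qed
  have "PH H MY = (\<Sum>r\<in>bitstrings n. PH H (run' (nqr r) q [] \<bind>
          (\<lambda>h'. map_pmf (\<lambda>v. if v \<in> Cd then Some (h' @ vp n v r) else None) (outr r h')))) / 2 ^ n"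
    unfolding PH_def MY_def
    by (simp add: bind_assoc_pmf pmf_bind integral_pmf_of_set[OF bitstrings_ne finite_bitstrings] card_bitstrings)
  then show ?thesis unfolding Y_def using inner by (simp add: sum_distrib_left)
qed

fun Mt :: "nat \<Rightarrow> 'a transcript option pmf" where
  "Mt 0 = return_pmf (Some [])"
| "Mt (Suc t) = Mt t \<bind> (\<lambda>a. MY \<bind> (\<lambda>b. return_pmf (comb2 a b)))"

lemma Y_pow: "Y H ^ t = 2 ^ (q * t) * PH H (Mt t)"
proof (induction t)
  case 0
  then show ?case by (simp add: PH_def bind_return_pmf sat'_def)
next
  case (Suc t)
  then show ?case by (simp add: PH_comb Y_form power_add algebra_simps)
qed

lemma MY_support: "Some \<rho> \<in> set_pmf MY \<Longrightarrow> length \<rho> = q + n"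
proof -
  assume "Some \<rho> \<in> set_pmf MY"
  then obtain r h' v where h': "h' \<in> set_pmf (run' (nqr r) q [])" and "v \<in> Cd" and e: "\<rho> = h' @ vp n v r"
    unfolding MY_def by (auto split: if_splits)
  from run'_support[OF h'] have "length h' = q" by auto
  then show ?thesis using e by (simp add: vp_def)
qed

lemma Mt_support: "Some \<rho> \<in> set_pmf (Mt t) \<Longrightarrow> length \<rho> \<le> t * (q + n)"
proof (induction t arbitrary: \<rho>)
  case 0
  then show ?case by simp
next
  case (Suc t)
  then obtain a b where a: "a \<in> set_pmf (Mt t)" and b: "b \<in> set_pmf MY" and e: "comb2 a b = Some \<rho>"
    by auto
  then obtain a' b' where "a = Some a'" "b = Some b'" "\<rho> = a' @ b'"
    by (cases a; cases b) auto
  then show ?case using Suc.IH a b MY_support by fastforce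
qed

end

context yz2 begin

lemma NN_sum: "real (NN n Sg \<rho>) = (\<Sum>H\<in>hfuncs n Sg. of_bool (sat H \<rho>))"
proof -
  have "(\<Sum>H\<in>hfuncs n Sg. of_bool (sat H \<rho>) :: real) = (\<Sum>H\<in>hfuncs n Sg. if sat H \<rho> then 1 else 0)"
    by (rule sum.cong) auto
  also have "\<dots> = real (card {H \<in> hfuncs n Sg. sat H \<rho>})"
    using finite_hfuncs[OF finS] by (simp add: sum.inter_filter[symmetric])
  finally show ?thesis by (simp add: NN_def)
qed

lemma A2:
  assumes "real (length \<rho>) + real q \<le> ell"
  shows "(\<Sum>H\<in>hfuncs n Sg. if sat H \<rho> then Y H else 0) \<le> real (NN n Sg \<rho>) * dl"
proof -
  have "(\<Sum>H\<in>hfuncs n Sg. if sat H \<rho> then Y H else 0)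
      = (\<Sum>H\<in>hfuncs n Sg. (\<Sum>r\<in>bitstrings n. if sat H \<rho> then succ (nqr r) (outr r) r H q [] else 0) / 2 ^ n)"
    unfolding Y_def by (rule sum.cong) auto
  also have "\<dots> = (\<Sum>r\<in>bitstrings n. \<Sum>H\<in>hfuncs n Sg. if sat H \<rho> then succ (nqr r) (outr r) r H q [] else 0) / 2 ^ n"
    by (simp add: sum_divide_distrib[symmetric] sum.swap[of _ "hfuncs n Sg"])
  also have "\<dots> \<le> (2 ^ n * real (NN n Sg \<rho>) * dl) / 2 ^ n"
    by (rule divide_right_mono[OF lemmaA]) (use assms in auto)
  also have "\<dots> = real (NN n Sg \<rho>) * dl" by simp
  finally show ?thesis .
qed

lemma step:
  assumes "real (t * (q + n)) + real q \<le> ell"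
  shows "(\<Sum>H\<in>hfuncs n Sg. PH H (Mt t) * Y H) \<le> dl * (\<Sum>H\<in>hfuncs n Sg. PH H (Mt t))"
proof -
  have "(\<Sum>H\<in>hfuncs n Sg. PH H (Mt t) * Y H)
     = (\<Sum>H\<in>hfuncs n Sg. measure_pmf.expectation (Mt t) (\<lambda>\<omega>. of_bool (sat' H \<omega>) * Y H))"
    by (simp add: PH_int)
  also have "\<dots> = measure_pmf.expectation (Mt t) (\<lambda>\<omega>. \<Sum>H\<in>hfuncs n Sg. of_bool (sat' H \<omega>) * Y H)"
    by (rule sym, rule Bochner_Integration.integral_sum[where f="\<lambda>H \<omega>. of_bool (sat' H \<omega>) * Y H"])
       (rule intb[where B=1], simp add: Y_nonneg Y_le1 abs_le_iff)
  also have "\<dots> \<le> measure_pmf.expectation (Mt t) (\<lambda>\<omega>. dl * (\<Sum>H\<in>hfuncs n Sg. of_bool (sat' H \<omega>)))"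
  proof (rule integral_mono_AE)
    show "integrable (measure_pmf (Mt t)) (\<lambda>\<omega>. \<Sum>H\<in>hfuncs n Sg. of_bool (sat' H \<omega>) * Y H)"
      by (rule intb[where B="real (card (hfuncs n Sg))"])
         (rule order_trans[OF sum_abs], rule order_trans[OF sum_mono[where g="\<lambda>_. 1"]], auto simp: Y_nonneg Y_le1 abs_le_iff)
    show "integrable (measure_pmf (Mt t)) (\<lambda>\<omega>. dl * (\<Sum>H\<in>hfuncs n Sg. of_bool (sat' H \<omega>)))"
      by (rule integrable_mult_right, rule intb[where B="real (card (hfuncs n Sg))"])
         (rule order_trans[OF sum_abs], rule order_trans[OF sum_mono[where g="\<lambda>_. 1"]], auto)
    show "AE \<omega> in measure_pmf (Mt t). (\<Sum>H\<in>hfuncs n Sg. of_bool (sat' H \<omega>) * Y H) \<le> dl * (\<Sum>H\<in>hfuncs n Sg. of_bool (sat' H \<omega>))"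
    proof (rule AE_pmfI)
      fix \<omega> assume \<omega>: "\<omega> \<in> set_pmf (Mt t)"
      show "(\<Sum>H\<in>hfuncs n Sg. of_bool (sat' H \<omega>) * Y H) \<le> dl * (\<Sum>H\<in>hfuncs n Sg. of_bool (sat' H \<omega>))"
      proof (cases \<omega>)
        case None
        then show ?thesis by (simp add: sat'_def)
      next
        case (Some \<rho>)
        have len: "real (length \<rho>) + real q \<le> ell"
        proof -
          have "length \<rho> \<le> t * (q + n)" using Mt_support[of \<rho> t] \<omega> Some by simp
          then have "real (length \<rho>) \<le> real (t * (q + n))" by (rule of_nat_mono)
          then show ?thesis using assms by linarith
        qed
        have "(\<Sum>H\<in>hfuncs n Sg. of_bool (sat' H \<omega>) * Y H) = (\<Sum>H\<in>hfuncs n Sg. if sat H \<rho> then Y H else 0)"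
          using Some by (intro sum.cong) (auto simp: sat'_def)
        also have "\<dots> \<le> real (NN n Sg \<rho>) * dl" by (rule A2[OF len])
        also have "\<dots> = dl * (\<Sum>H\<in>hfuncs n Sg. of_bool (sat' H \<omega>))"
          using Some by (simp add: NN_sum sat'_def)
        finally show ?thesis .
      qed
    qed
  qed
  also have "\<dots> = dl * (\<Sum>H\<in>hfuncs n Sg. PH H (Mt t))"
  proof -
    have "measure_pmf.expectation (Mt t) (\<lambda>\<omega>. \<Sum>H\<in>hfuncs n Sg. of_bool (sat' H \<omega>)) = (\<Sum>H\<in>hfuncs n Sg. PH H (Mt t))"
      unfolding PH_int by (rule Bochner_Integration.integral_sum[where f="\<lambda>H \<omega>. of_bool (sat' H \<omega>)"]) (rule intb[where B=1], simp)
    then show ?thesis by simp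
  qed
  finally show ?thesis .
qed

lemma dl_nonneg: "0 \<le> ell \<Longrightarrow> 0 \<le> dl"
  using heavy_bound[of "[]"] th_nonneg unfolding dl_def by simp

lemma tfold:
  "real (t * (q + n)) \<le> ell \<Longrightarrow> (\<Sum>H\<in>hfuncs n Sg. Y H ^ t) \<le> dl ^ t * real (card (hfuncs n Sg))"
proof (induction t)
  case 0
  then show ?case by simp
next
  case (Suc t)
  have e1: "real (t * (q + n)) + real q \<le> ell" using Suc.prems by simp
  have e2: "real (t * (q + n)) \<le> ell" using Suc.prems by simp
  have "(\<Sum>H\<in>hfuncs n Sg. Y H ^ Suc t) = 2 ^ (q * t) * (\<Sum>H\<in>hfuncs n Sg. PH H (Mt t) * Y H)"
    by (simp add: Y_pow sum_distrib_left algebra_simps)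
  also have "\<dots> \<le> 2 ^ (q * t) * (dl * (\<Sum>H\<in>hfuncs n Sg. PH H (Mt t)))"
    by (rule mult_left_mono[OF step[OF e1]]) simp
  also have "\<dots> = dl * (\<Sum>H\<in>hfuncs n Sg. Y H ^ t)"
    by (simp add: Y_pow sum_distrib_left algebra_simps)
  also have "\<dots> \<le> dl * (dl ^ t * real (card (hfuncs n Sg)))"
  proof (rule mult_left_mono[OF Suc.IH[OF e2]])
    have "0 \<le> real (Suc t * (q + n))" by simp
    then show "0 \<le> dl" using Suc.prems dl_nonneg by linarith
  qed
  finally show ?case by simp
qed

end

definition Yg :: "nat \<Rightarrow> 'a list set \<Rightarrow> nat \<Rightarrow> (bool list \<Rightarrow> 'a transcript \<Rightarrow> (nat \<times> 'a) pmf) \<Rightarrow>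
    (bool list \<Rightarrow> 'a transcript \<Rightarrow> 'a list pmf) \<Rightarrow> 'a hfun \<Rightarrow> real" where
  "Yg n Cd k nqr outr H = (\<Sum>r\<in>bitstrings n. pmf (alg_output (nqr r) (outr r) H k \<bind> (\<lambda>v. return_pmf (yz_eq n Cd H v r))) True) / 2 ^ n"

lemma Yg_facts:
  assumes "yz n Sg Cd ze ell L"
  shows "0 \<le> Yg n Cd k nqr outr H" "Yg n Cd k nqr outr H \<le> 1"
    "real (t * (k + n)) \<le> ell \<Longrightarrow> (\<Sum>H\<in>hfuncs n Sg. Yg n Cd k nqr outr H ^ t)
       \<le> (L * ((1/2)^n + 2 powr (-(ze * real n))) + 2 powr (-(ze * real n))) ^ t * real (card (hfuncs n Sg))"
proof -
  interpret yz2 n Sg Cd ze ell L k nqr outr using assms by (simp add: yz2_def)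
  have e: "Yg n Cd k nqr outr H = Y H" for H
    unfolding Yg_def Y_def succ_def alg_output_def by (simp add: bind_assoc_pmf)
  show "0 \<le> Yg n Cd k nqr outr H" "Yg n Cd k nqr outr H \<le> 1" using e Y_nonneg Y_le1 by auto
  show "real (t * (k + n)) \<le> ell \<Longrightarrow> (\<Sum>H\<in>hfuncs n Sg. Yg n Cd k nqr outr H ^ t)
       \<le> (L * ((1/2)^n + 2 powr (-(ze * real n))) + 2 powr (-(ze * real n))) ^ t * real (card (hfuncs n Sg))"
    using tfold[of t] e by (simp add: dl_def th_def)
qed

lemma L_nonneg: "yz n Sg Cd ze ell L \<Longrightarrow> 0 \<le> ell \<Longrightarrow> 0 \<le> L"
proof -
  assume a: "yz n Sg Cd ze ell L" "0 \<le> ell"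
  interpret yz n Sg Cd ze ell L by (rule a(1))
  show ?thesis using heavy_bound[of "[]"] a(2) by simp
qed

lemma jensen_pow:
  fixes x :: "'b \<Rightarrow> real"
  assumes "finite S" "S \<noteq> {}" "\<And>i. i \<in> S \<Longrightarrow> 0 \<le> x i"
  shows "((\<Sum>i\<in>S. x i) / real (card S)) ^ t \<le> (\<Sum>i\<in>S. x i ^ t) / real (card S)"
proof -
  have cv: "convex_on {0::real..} (\<lambda>x. x ^ t)"
  proof (cases "even t")
    case True
    then show ?thesis using convex_power_even[OF True] convex_on_subset by blast
  next
    case False
    then show ?thesis using convex_power_odd by blast
  qed
  have c: "0 < real (card S)" using assms(1,2) by (simp add: card_gt_0_iff)
  have "((\<Sum>i\<in>S. (1 / real (card S)) *\<^sub>R x i)) ^ t \<le> (\<Sum>i\<in>S. (1 / real (card S)) * x i ^ t)"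
    by (rule convex_on_sum[OF assms(1,2) cv, where a="\<lambda>_. 1 / real (card S)"]) (use assms c in auto)
  then show ?thesis by (simp add: sum_distrib_left[symmetric] sum_distrib_right[symmetric] divide_inverse mult.commute)
qed

lemma hfuncs_ne: "hfuncs n S \<noteq> {}"
  using hfuncs_nonempty by blast

lemma succ_prob_eq:
  assumes "finite (Sg n)"
  shows "success_prob nq out q Sg C n z =
    (\<Sum>H\<in>hfuncs n (Sg n). Yg n (C n) (q n) (nq n (z H)) (out n (z H)) H) / real (card (hfuncs n (Sg n)))"
  unfolding success_prob_def Yg_def
  by (simp add: pmf_bind integral_pmf_of_set[OF hfuncs_ne finite_hfuncs[OF assms]]
        integral_pmf_of_set[OF bitstrings_ne finite_bitstrings] card_bitstrings sum_divide_distrib[symmetric])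

lemma perN:
  fixes nqA :: "bool list \<Rightarrow> bool list \<Rightarrow> 'a transcript \<Rightarrow> (nat \<times> 'a) pmf"
    and outA :: "bool list \<Rightarrow> bool list \<Rightarrow> 'a transcript \<Rightarrow> 'a list pmf"
    and z :: "'a hfun \<Rightarrow> bool list"
  assumes yz: "yz n Sg Cd ze ell L" and len: "real ((s+1) * (k+n)) \<le> ell"
    and zA: "\<forall>H. length (z H) = s"
  shows "(\<Sum>H\<in>hfuncs n Sg. Yg n Cd k (nqA (z H)) (outA (z H)) H) / real (card (hfuncs n Sg))
     \<le> 2 * (L * ((1/2)^n + 2 powr (-(ze * real n))) + 2 powr (-(ze * real n)))"
proof -
  interpret yz n Sg Cd ze ell L by (rule yz)
  define D where "D = L * ((1/2)^n + 2 powr (-(ze * real n))) + 2 powr (-(ze * real n))"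
  define X where "X H = Yg n Cd k (nqA (z H)) (outA (z H)) H" for H
  define F where "F = hfuncs n Sg"
  define m where "m = (\<Sum>H\<in>F. X H) / real (card F)"
  have finF: "finite F" "F \<noteq> {}" unfolding F_def by (simp_all add: finite_hfuncs[OF finS] hfuncs_ne)
  have cF: "0 < real (card F)" using finF by (simp add: card_gt_0_iff)
  have ell0: "0 \<le> ell" using len by (smt (verit) of_nat_0_le_iff)
  have L0: "0 \<le> L" using L_nonneg[OF yz ell0] .
  have D0: "0 \<le> D" unfolding D_def using L0 by simp
  have Xnn: "0 \<le> X H" for H unfolding X_def using Yg_facts(1)[OF yz] by blast
  have j: "m ^ Suc s \<le> (\<Sum>H\<in>F. X H ^ Suc s) / real (card F)"
    unfolding m_def by (rule jensen_pow[OF finF]) (simp add: Xnn)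
  have xb: "X H ^ Suc s \<le> (\<Sum>a\<in>bitstrings s. Yg n Cd k (nqA a) (outA a) H ^ Suc s)" for H
  proof -
    have "z H \<in> bitstrings s" using zA by (simp add: bitstrings_def)
    then show ?thesis unfolding X_def
      by (intro member_le_sum[where f="\<lambda>a. Yg n Cd k (nqA a) (outA a) H ^ Suc s"])
         (auto simp: finite_bitstrings simp del: power_Suc intro!: zero_le_power Yg_facts(1)[OF yz])
  qed
  have "(\<Sum>H\<in>F. X H ^ Suc s) \<le> (\<Sum>H\<in>F. \<Sum>a\<in>bitstrings s. Yg n Cd k (nqA a) (outA a) H ^ Suc s)"
    by (rule sum_mono) (rule xb)
  also have "\<dots> = (\<Sum>a\<in>bitstrings s. \<Sum>H\<in>F. Yg n Cd k (nqA a) (outA a) H ^ Suc s)"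
    by (rule sum.swap)
  also have "\<dots> \<le> (\<Sum>a\<in>bitstrings s. D ^ Suc s * real (card F))"
  proof (rule sum_mono)
    fix a
    have "real (Suc s * (k + n)) \<le> ell" using len by simp
    then show "(\<Sum>H\<in>F. Yg n Cd k (nqA a) (outA a) H ^ Suc s) \<le> D ^ Suc s * real (card F)"
      unfolding F_def D_def by (rule Yg_facts(3)[OF yz])
  qed
  also have "\<dots> = 2 ^ s * D ^ Suc s * real (card F)" by (simp add: card_bitstrings)
  finally have "(\<Sum>H\<in>F. X H ^ Suc s) / real (card F) \<le> 2 ^ s * D ^ Suc s"
    using cF by (simp add: divide_le_eq)
  then have "m ^ Suc s \<le> 2 ^ s * D ^ Suc s" using j by linarith
  also have "\<dots> \<le> (2 * D) ^ Suc s"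
    using D0 by (simp add: power_mult_distrib)
  finally have "m \<le> 2 * D" by (rule power_le_imp_le_base) (simp add: D0)
  then show ?thesis unfolding m_def X_def F_def D_def .
qed

lemma asym1:
  fixes M D c :: real
  assumes "c > 0"
  shows "eventually (\<lambda>n::nat. M * (real n + 1) powr D \<le> 2 powr (real n powr c)) sequentially"
proof -
  have "filterlim (\<lambda>n::nat. M * (real n + 1) powr D / 2 powr (real n powr c)) (nhds 0) sequentially"
    using assms by real_asymp
  then have "eventually (\<lambda>n::nat. M * (real n + 1) powr D / 2 powr (real n powr c) < 1) sequentially"
    by (rule order_tendstoD(2)) simp
  then show ?thesis
    by eventually_elim (simp add: divide_less_eq)
qed

lemma asym2:
  fixes a K z c' :: real and k :: nat
  assumes "z > 0" "c' < 1" "c' > 0" "K > 0"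
  shows "eventually (\<lambda>n::nat. 6 * real n powr a * 2 powr (K * real n powr c' * ln (real n) ^ k - z * real n) \<le> 1) sequentially"
proof -
  have "filterlim (\<lambda>n::nat. 6 * real n powr a * 2 powr (K * real n powr c' * ln (real n) ^ k - z * real n)) (nhds 0) sequentially"
    using assms by real_asymp
  then have "eventually (\<lambda>n::nat. 6 * real n powr a * 2 powr (K * real n powr c' * ln (real n) ^ k - z * real n) < 1) sequentially"
    by (rule order_tendstoD(2)) simp
  then show ?thesis by eventually_elim simp
qed

lemma poly_bound_nat:
  assumes "poly_bounded s" "poly_bounded q"
  obtains M D :: nat where "\<And>n. (s n + 1) * (q n + n) \<le> M * (n+1)^D"
proof -
  obtain Ks ds where hs: "\<forall>n. s n \<le> Ks * (n+1)^ds" using assms(1) unfolding poly_bounded_def by blast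
  obtain Kq dq where hq: "\<forall>n. q n \<le> Kq * (n+1)^dq" using assms(2) unfolding poly_bounded_def by blast
  have "(s n + 1) * (q n + n) \<le> ((Ks+1)*(Kq+1)) * (n+1)^(ds + (dq+1))" for n
  proof -
    have p1: "1 \<le> (n+1)^ds" by simp
    have "s n + 1 \<le> Ks*(n+1)^ds + (n+1)^ds" using hs p1 add_le_mono by blast
    then have a: "s n + 1 \<le> (Ks+1)*(n+1)^ds" by (simp add: algebra_simps)
    have b1: "(n+1)^dq \<le> (n+1)^(dq+1)" by (rule power_increasing) auto
    have "(n+1) * 1 \<le> (n+1) * (n+1)^dq" by (rule mult_le_mono2) simp
    then have b2: "n \<le> (n+1)^(dq+1)" by simp
    have "q n \<le> Kq * (n+1)^(dq+1)" using hq b1 by (meson le_trans mult_le_mono2)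
    then have b: "q n + n \<le> (Kq+1)*(n+1)^(dq+1)" using b2 by (simp add: algebra_simps)
    show ?thesis using mult_le_mono[OF a b] by (simp add: power_add algebra_simps)
  qed
  then show ?thesis by (rule that)
qed

lemma Dbound:
  fixes K ze c' :: real and k n :: nat
  assumes "n \<ge> 1" "ze > 0"
  shows "2 powr (K * real n powr c' * ln (real n) ^ k) * ((1/2)^n + 2 powr (-(ze * real n))) + 2 powr (-(ze * real n))
     \<le> 3 * 2 powr ((\<bar>K\<bar>+1) * (real n powr c' * ln (real n) ^ k) - min ze 1 * real n)"
proof -
  define A where "A = real n powr c' * ln (real n) ^ k"
  define E where "E = (\<bar>K\<bar>+1) * A"
  define w where "w = 2 powr (-(min ze 1 * real n))"
  have A0: "0 \<le> A" unfolding A_def using assms by simp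
  have E0: "0 \<le> E" unfolding E_def using A0 by simp
  have KA: "K * A \<le> E" unfolding E_def using A0 by (smt (verit, best) mult_right_mono abs_ge_self)
  have t1: "(1/2::real)^n \<le> w"
  proof -
    have "(1/2::real)^n = 2 powr (- real n)" by (simp add: powr_minus powr_realpow power_one_over inverse_eq_divide)
    also have "\<dots> \<le> w" unfolding w_def
      using assms(2) by (intro powr_mono) (auto intro!: mult_left_le_one_le)
    finally show ?thesis .
  qed
  have t2: "2 powr (-(ze * real n)) \<le> w" unfolding w_def
    using assms(2) by (intro powr_mono) (auto intro!: mult_right_mono)
  have w0: "0 \<le> w" unfolding w_def by simp
  have "2 powr (K * real n powr c' * ln (real n) ^ k) * ((1/2)^n + 2 powr (-(ze * real n)))
      \<le> 2 powr E * (2 * w)"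
  proof (rule mult_mono)
    show "2 powr (K * real n powr c' * ln (real n) ^ k) \<le> 2 powr E"
      using KA unfolding A_def by (intro powr_mono) (auto simp: mult.assoc)
  qed (use t1 t2 in auto)
  also have "\<dots> = 2 * 2 powr (E - min ze 1 * real n)"
    unfolding w_def by (simp add: powr_add[symmetric])
  finally have x: "2 powr (K * real n powr c' * ln (real n) ^ k) * ((1/2)^n + 2 powr (-(ze * real n))) \<le> 2 * 2 powr (E - min ze 1 * real n)" .
  have y: "2 powr (-(ze * real n)) \<le> 2 powr (E - min ze 1 * real n)"
    using t2 E0 unfolding w_def by (smt (verit) powr_mono one_le_numeral)
  show ?thesis using x y unfolding E_def A_def by linarith
qed

theorem theorem3p3:
  fixes \<Sigma> :: "nat \<Rightarrow> 'a set" and C :: "nat \<Rightarrow> 'a list set"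
    and nq :: "nat \<Rightarrow> bool list \<Rightarrow> bool list \<Rightarrow> 'a transcript \<Rightarrow> (nat \<times> 'a) pmf"
    and out :: "nat \<Rightarrow> bool list \<Rightarrow> bool list \<Rightarrow> 'a transcript \<Rightarrow> 'a list pmf"
    and q s :: "nat \<Rightarrow> nat"
  assumes "good_code_family \<Sigma> C"
    and "poly_bounded q"
    and "poly_bounded s"
  shows "\<exists>\<mu>. negl_fun \<mu> \<and>
           (\<forall>n. \<forall>z :: 'a hfun \<Rightarrow> bool list. (\<forall>H. length (z H) = s n) \<longrightarrow>
              success_prob nq out q \<Sigma> C n z \<le> \<mu> n)"
proof -
  have fin: "\<And>n. finite (\<Sigma> n)" and sub: "\<And>n. C n \<subseteq> words n (\<Sigma> n)"
    using assms(1) unfolding good_code_family_def by auto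
  obtain ze c c' K k N where z0: "ze > 0" and c0: "0 < c" and cc: "c < c'" and c1: "c' < 1"
    and LRn: "\<forall>n\<ge>N. list_recoverable n (\<Sigma> n) (C n) ze (2 powr (real n powr c))
                 (2 powr (K * real n powr c' * (ln (real n)) ^ k))"
    using assms(1) unfolding good_code_family_def by blast
  define ell where "ell n = 2 powr (real n powr c)" for n :: nat
  define Ln where "Ln n = 2 powr (K * real n powr c' * (ln (real n)) ^ k)" for n :: nat
  define D where "D n = Ln n * ((1/2)^n + 2 powr (-(ze * real n))) + 2 powr (-(ze * real n))" for n :: nat
  obtain M Dd :: nat where pb: "\<And>n. (s n + 1) * (q n + n) \<le> M * (n+1)^Dd"
    using poly_bound_nat[OF assms(3,2)] by blast
  obtain N1 where N1: "\<And>n. n \<ge> N1 \<Longrightarrow> real M * (real n + 1) powr real Dd \<le> 2 powr (real n powr c)"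
    using asym1[OF c0, of "real M" "real Dd"] unfolding eventually_sequentially by blast
  define N' where "N' = max N N1"
  define \<mu> where "\<mu> n = (if n \<ge> N' then 2 * D n else 1)" for n
  have D0: "0 \<le> D n" for n unfolding D_def Ln_def by simp
  show ?thesis
  proof (intro exI[of _ \<mu>] conjI allI impI)
    show "negl_fun \<mu>"
      unfolding negl_fun_def
    proof
      fix c0 :: nat
      have cpos: "0 < c'" using c0 cc by simp
      obtain N2 where N2: "\<And>n. n \<ge> N2 \<Longrightarrow> 6 * real n powr real c0 * 2 powr ((\<bar>K\<bar>+1) * real n powr c' * ln (real n) ^ k - min ze 1 * real n) \<le> 1"
      proof -
        have mz: "0 < min ze 1" using z0 by simp
        have kp: "0 < \<bar>K\<bar> + 1" by (smt (verit) abs_ge_zero)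
        show ?thesis using that asym2[OF mz c1 cpos kp, where a="real c0" and k=k]
          unfolding eventually_sequentially by blast
      qed
      show "\<exists>N. \<forall>n\<ge>N. \<bar>\<mu> n\<bar> \<le> 1 / real n ^ c0"
      proof (intro exI[of _ "max N' (max N2 1)"] allI impI)
        fix n assume n: "max N' (max N2 1) \<le> n"
        then have n1: "n \<ge> 1" and nN': "n \<ge> N'" and nN2: "n \<ge> N2" by auto
        define X where "X = 2 powr ((\<bar>K\<bar>+1) * (real n powr c' * ln (real n) ^ k) - min ze 1 * real n)"
        have d3: "D n \<le> 3 * X" unfolding D_def Ln_def X_def by (rule Dbound[OF n1 z0])
        have h6: "6 * real n powr real c0 * X \<le> 1" using N2[OF nN2] unfolding X_def by (simp add: mult.assoc)
        have pe: "real n powr real c0 = real n ^ c0" using n1 by (simp add: powr_realpow)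
        have pp: "0 < real n ^ c0" using n1 by simp
        have "(6 * X) * real n ^ c0 \<le> 1" using h6 pe by (simp add: mult_ac)
        then have "6 * X \<le> 1 / real n ^ c0" using pp by (simp add: pos_le_divide_eq)
        then have "2 * D n \<le> 1 / real n ^ c0" using d3 by linarith
        then show "\<bar>\<mu> n\<bar> \<le> 1 / real n ^ c0" using nN' D0[of n] by (simp add: \<mu>_def)
      qed
    qed
  next
    fix n and z :: "'a hfun \<Rightarrow> bool list"
    assume zl: "\<forall>H. length (z H) = s n"
    show "success_prob nq out q \<Sigma> C n z \<le> \<mu> n"
    proof (cases "n \<ge> N'")
      case True
      have yzn: "yz n (\<Sigma> n) (C n) ze (ell n) (Ln n)"
        unfolding yz_def ell_def Ln_def using fin sub LRn True by (auto simp: N'_def)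
      have "real ((s n + 1) * (q n + n)) \<le> real (M * (n+1)^Dd)" using pb of_nat_mono by blast
      also have "\<dots> = real M * (real n + 1) powr real Dd" by (simp add: powr_realpow add_pos_nonneg add.commute)
      also have "\<dots> \<le> ell n" unfolding ell_def using N1 True by (simp add: N'_def)
      finally have len: "real ((s n + 1) * (q n + n)) \<le> ell n" .
      have "success_prob nq out q \<Sigma> C n z =
         (\<Sum>H\<in>hfuncs n (\<Sigma> n). Yg n (C n) (q n) (nq n (z H)) (out n (z H)) H) / real (card (hfuncs n (\<Sigma> n)))"
        by (rule succ_prob_eq[OF fin])
      also have "\<dots> \<le> 2 * (Ln n * ((1/2)^n + 2 powr (-(ze * real n))) + 2 powr (-(ze * real n)))"
        by (rule perN[OF yzn len zl])
      also have "\<dots> = \<mu> n" using True by (simp add: \<mu>_def D_def)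
      finally show ?thesis .
    next
      case False
      have "success_prob nq out q \<Sigma> C n z \<le> 1" unfolding success_prob_def by (rule pmf_le_1)
      then show ?thesis using False by (simp add: \<mu>_def)
    qed
  qed
qed

end
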